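(* Let $q(z)$ be a mixing distribution and $q_\phi(x|z)$ a conditional density on $\mathbb{R}^d$ with tractable score $s_{q_\phi(\cdot|z)}(x)=\nabla_x\log q_\phi(x|z)$, and let $q_\phi(x)=\int q_\phi(x|z)q(z)\,\mathrm{d}z$, $q_\phi(x,z)=q_\phi(x|z)q(z)$. Let $p$ be a target density on $\mathbb{R}^d$ with score $s_p=\nabla\log p$, and $k$ a continuous positive semi-definite kernel on $\mathbb{R}^d$ with RKHS $\mathcal{H}_0$, $\mathcal{H}=\mathcal{H}_0^{\otimes d}$. Then the maximizer $f^*(x)=\mathbb{E}_{q_\phi(y)}k(x,y)[s_p(y)-s_{q_\phi}(y)]$ of $f\mapsto \mathbb{E}_{q_\phi(x)}[2f(x)^\top(s_p(x)-s_{q_\phi}(x))]-\|f\|_{\mathcal{H}}^2$ over $\mathcal{H}$ can be rewritten as $$f^*(x)=\mathbb{E}_{q_\phi(y,z)}\,k(x,y)\big[s_p(y)-s_{q_\phi(\cdot|z)}(y)\big],$$ and $$\mathrm{KSD}(q_\phi\|p)^2=\mathbb{E}_{q_\phi(x,z),\,q_\phi(x',z')}\Big[k(x,x')\big\langle s_p(x)-s_{q_\phi(\cdot|z)}(x),\ s_p(x')-s_{q_\phi(\cdot|z')}(x')\big\rangle\Big],$$ where $(x,z)$ and $(x',z')$ are independent draws from $q_\phi(x,z)$.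
   Context: $s_{q_\phi}=\nabla\log q_\phi$ is the (generally intractable) marginal score. The kernel Stein discrepancy is $\mathrm{KSD}(q\|p)^2=\mathbb{E}_{x,y\sim q}\big[(s_p(x)-s_q(x))^\top k(x,y)(s_p(y)-s_q(y))\big]$. *)

theory Defs
  imports "HOL-Analysis.Analysis"
begin

definition has_score :: "('a::euclidean_space \<Rightarrow> real) \<Rightarrow> ('a \<Rightarrow> 'a) \<Rightarrow> bool" where
  "has_score f s \<longleftrightarrow>
     (\<forall>x. f x > 0 \<and> ((\<lambda>y. ln (f y)) has_derivative (\<lambda>h. s x \<bullet> h)) (at x))"

definition psd_kernel :: "('a \<Rightarrow> 'a \<Rightarrow> real) \<Rightarrow> bool" where
  "psd_kernel k \<longleftrightarrow> (\<forall>x y. k x y = k y x) \<and>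
     (\<forall>(n::nat) (xs::nat \<Rightarrow> 'a) (c::nat \<Rightarrow> real).
        (\<Sum>i<n. \<Sum>j<n. c i * c j * k (xs i) (xs j)) \<ge> 0)"

definition mix_marginal :: "('a::euclidean_space \<Rightarrow> 'b::euclidean_space \<Rightarrow> real) \<Rightarrow> ('b \<Rightarrow> real) \<Rightarrow> 'a \<Rightarrow> real" where
  "mix_marginal qc qz x = (\<integral>z. qc x z * qz z \<partial>lborel)"

definition mix_joint :: "('a::euclidean_space \<Rightarrow> 'b::euclidean_space \<Rightarrow> real) \<Rightarrow> ('b \<Rightarrow> real) \<Rightarrow> ('a \<times> 'b) measure" where
  "mix_joint qc qz = density (lborel \<Otimes>\<^sub>M lborel) (\<lambda>(x,z). ennreal (qc x z * qz z))"

definition KSD2 :: "'a::euclidean_space measure \<Rightarrow> ('a \<Rightarrow> 'a) \<Rightarrow> ('a \<Rightarrow> 'a) \<Rightarrow> ('a \<Rightarrow> 'a \<Rightarrow> real) \<Rightarrow> real" where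
  "KSD2 Q sq sp k = (\<integral>(x,y). (sp x - sq x) \<bullet> (k x y *\<^sub>R (sp y - sq y)) \<partial>(Q \<Otimes>\<^sub>M Q))"

definition stein_witness :: "'a::euclidean_space measure \<Rightarrow> ('a \<Rightarrow> 'a) \<Rightarrow> ('a \<Rightarrow> 'a) \<Rightarrow> ('a \<Rightarrow> 'a \<Rightarrow> real) \<Rightarrow> 'a \<Rightarrow> 'a" where
  "stein_witness Q sq sp k x = (\<integral>y. k x y *\<^sub>R (sp y - sq y) \<partial>Q)"

end

theory Submission
  imports Defs "HOL-Analysis.Radon_Nikodym"
begin

lemma score_line:
  fixes f :: "'a::euclidean_space \<Rightarrow> real"
  assumes "has_score f s"
  shows "((\<lambda>t. f (y + t *\<^sub>R h)) has_real_derivative f (y + t *\<^sub>R h) * (s (y + t *\<^sub>R h) \<bullet> h)) (at t)"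
proof -
  let ?x = "y + t *\<^sub>R h"
  have pos: "\<And>x. f x > 0" and d: "((\<lambda>y. ln (f y)) has_derivative (\<lambda>v. s ?x \<bullet> v)) (at ?x)"
    using assms unfolding has_score_def by auto
  have l: "((\<lambda>t. y + t *\<^sub>R h) has_derivative (\<lambda>d. d *\<^sub>R h)) (at t)"
    by (auto intro!: derivative_eq_intros)
  have dd: "((\<lambda>t. ln (f (y + t *\<^sub>R h))) has_derivative (\<lambda>d. s ?x \<bullet> (d *\<^sub>R h))) (at t)"
    using has_derivative_compose[OF l d] by simp
  have "((\<lambda>t. ln (f (y + t *\<^sub>R h))) has_real_derivative (s ?x \<bullet> h)) (at t)"
  proof -
    have e: "(\<lambda>d. s ?x \<bullet> (d *\<^sub>R h)) = (*) (s ?x \<bullet> h)" by (auto simp: fun_eq_iff)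
    show ?thesis unfolding has_field_derivative_def using dd e by simp
  qed
  from DERIV_fun_exp[OF this] show ?thesis using pos by simp
qed

lemma seq_deriv:
  fixes F :: "real \<Rightarrow> real"
  assumes "(F has_real_derivative D) (at 0)" "\<And>n. t n \<noteq> 0" "t \<longlonglongrightarrow> 0"
  shows "(\<lambda>n. (F (t n) - F 0) / t n) \<longlonglongrightarrow> D"
proof -
  have "((\<lambda>h. (F (0 + h) - F 0) / h) \<longlongrightarrow> D) (at 0)" using assms(1) unfolding DERIV_def .
  hence "((\<lambda>h. (F h - F 0) / h) \<longlongrightarrow> D) (at 0)" by simp
  thus ?thesis using assms(2,3) unfolding LIMSEQ_SEQ_conv[symmetric] by blast
qed

locale mix =
  fixes qc :: "'a::euclidean_space \<Rightarrow> 'b::euclidean_space \<Rightarrow> real"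
    and qz :: "'b \<Rightarrow> real"
    and sc :: "'b \<Rightarrow> 'a \<Rightarrow> 'a"
    and sq :: "'a \<Rightarrow> 'a"
  assumes qz_nonneg: "\<And>z. qz z \<ge> 0"
    and qz_meas: "qz \<in> borel_measurable lborel"
    and qc_meas: "(\<lambda>(x,z). qc x z) \<in> borel_measurable (lborel \<Otimes>\<^sub>M lborel)"
    and qc_score: "\<And>z. has_score (\<lambda>x. qc x z) (sc z)"
    and sc_meas: "(\<lambda>(x,z). sc z x) \<in> borel_measurable (lborel \<Otimes>\<^sub>M lborel)"
    and q_score: "has_score (mix_marginal qc qz) sq"
    and dom: "\<And>x. \<exists>e>0. \<exists>g. integrable lborel g \<and>
                 (\<forall>y\<in>ball x e. \<forall>z. qc y z * norm (sc z y) * qz z \<le> g z)"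
begin

abbreviation "q \<equiv> mix_marginal qc qz"

lemma qcM[measurable (raw)]:
  assumes "f \<in> borel_measurable M" "g \<in> borel_measurable M"
  shows "(\<lambda>p. qc (f p) (g p)) \<in> borel_measurable M"
proof -
  have "(\<lambda>p. (f p, g p)) \<in> measurable M (lborel \<Otimes>\<^sub>M lborel)" using assms by measurable
  from measurable_compose[OF this qc_meas] show ?thesis by simp
qed

lemma scM[measurable (raw)]:
  assumes "f \<in> borel_measurable M" "g \<in> borel_measurable M"
  shows "(\<lambda>p. sc (g p) (f p)) \<in> borel_measurable M"
proof -
  have "(\<lambda>p. (f p, g p)) \<in> measurable M (lborel \<Otimes>\<^sub>M lborel)" using assms by measurable
  from measurable_compose[OF this sc_meas] show ?thesis by simp
qed

lemma qzM[measurable (raw)]: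
  assumes "f \<in> borel_measurable M"
  shows "(\<lambda>p. qz (f p)) \<in> borel_measurable M"
  using measurable_compose[OF assms qz_meas[unfolded measurable_lborel2]] by simp

lemma qc_pos: "qc x z > 0"
  using qc_score[of z] unfolding has_score_def by auto

lemma q_pos: "q x > 0"
  using q_score unfolding has_score_def by auto

lemma w_nonneg: "qc x z * qz z \<ge> 0"
  using qc_pos[of x z] qz_nonneg[of z] by simp

lemma int_w: "integrable lborel (\<lambda>z. qc x z * qz z)"
proof (rule ccontr)
  assume "\<not> ?thesis"
  hence "q x = 0" unfolding mix_marginal_def by (rule not_integrable_integral_eq)
  with q_pos[of x] show False by simp
qed

lemma int_v: "integrable lborel (\<lambda>z. (qc x z * qz z) *\<^sub>R sc z x)"
proof -
  obtain e g where e: "e > 0" and g: "integrable lborel g"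
    and b: "\<And>y z. y \<in> ball x e \<Longrightarrow> qc y z * norm (sc z y) * qz z \<le> g z"
    using dom[of x] by blast
  show ?thesis
  proof (rule Bochner_Integration.integrable_bound[OF g])
    show "(\<lambda>z. (qc x z * qz z) *\<^sub>R sc z x) \<in> borel_measurable lborel" by measurable
    show "AE z in lborel. norm ((qc x z * qz z) *\<^sub>R sc z x) \<le> norm (g z)"
    proof (intro AE_I2)
      fix z
      have "norm ((qc x z * qz z) *\<^sub>R sc z x) = qc x z * norm (sc z x) * qz z"
        using w_nonneg[of x z] by (simp add: ac_simps)
      also have "\<dots> \<le> g z" using b[of x z] e by simp
      finally show "norm ((qc x z * qz z) *\<^sub>R sc z x) \<le> norm (g z)" by simp
    qed
  qed
qed

lemma key_dir:
  "(\<integral>z. (qc y z * qz z) *\<^sub>R sc z y \<partial>lborel) \<bullet> h = q y * (sq y \<bullet> h)"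
proof (cases "h = 0")
  case True then show ?thesis by simp
next
  case False
  obtain e g where e: "e > 0" and g: "integrable lborel g"
    and b: "\<And>y' z. y' \<in> ball y e \<Longrightarrow> qc y' z * norm (sc z y') * qz z \<le> g z"
    using dom[of y] by blast
  define c where "c = e / (norm h + 1)"
  have n1: "norm h + 1 > 0" by (simp add: add_nonneg_pos)
  have c: "c > 0" using e n1 unfolding c_def by (intro divide_pos_pos)
  have ch: "c * norm h < e"
  proof -
    have "c * norm h < c * (norm h + 1)" using c by simp
    also have "\<dots> = e" unfolding c_def using n1 by simp
    finally show ?thesis .
  qed
  define t where "t n = c / real (Suc n)" for n
  have tpos: "t n > 0" for n using c by (simp add: t_def)
  have tle: "t n \<le> c" for n using c by (simp add: t_def field_simps)
  have t0: "t \<longlonglongrightarrow> 0"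
    unfolding t_def using LIMSEQ_Suc[OF lim_const_over_n[of c]] by simp
  have tnz: "t n \<noteq> 0" for n using tpos[of n] by simp
  have L1: "(\<lambda>n. (q (y + t n *\<^sub>R h) - q y) / t n) \<longlonglongrightarrow> q y * (sq y \<bullet> h)"
    using seq_deriv[OF score_line[OF q_score, of y h 0] tnz t0] by simp
  define D where "D n z = (qc (y + t n *\<^sub>R h) z * qz z - qc y z * qz z) / t n" for n z
  have intD: "integral\<^sup>L lborel (D n) = (q (y + t n *\<^sub>R h) - q y) / t n" for n
    unfolding D_def mix_marginal_def
    using int_w[of "y + t n *\<^sub>R h"] int_w[of y] by simp
  have lim_pt: "(\<lambda>n. D n z) \<longlonglongrightarrow> (qc y z * (sc z y \<bullet> h)) * qz z" for z
  proof -
    have "(\<lambda>n. (qc (y + t n *\<^sub>R h) z - qc y z) / t n) \<longlonglongrightarrow> qc y z * (sc z y \<bullet> h)"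
      using seq_deriv[OF score_line[OF qc_score[of z], of y h 0] tnz t0] by simp
    hence "(\<lambda>n. (qc (y + t n *\<^sub>R h) z - qc y z) / t n * qz z) \<longlonglongrightarrow> qc y z * (sc z y \<bullet> h) * qz z"
      by (intro tendsto_intros)
    moreover have "D n z = (qc (y + t n *\<^sub>R h) z - qc y z) / t n * qz z" for n
      unfolding D_def by (simp add: field_simps)
    ultimately show ?thesis by simp
  qed
  have bnd: "norm (D n z) \<le> norm h * g z" for n z
  proof -
    let ?F = "\<lambda>s. qc (y + s *\<^sub>R h) z"
    have "\<exists>\<xi>. 0 < \<xi> \<and> \<xi> < t n \<and> ?F (t n) - ?F 0 =
        (t n - 0) * (qc (y + \<xi> *\<^sub>R h) z * (sc z (y + \<xi> *\<^sub>R h) \<bullet> h))"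
      by (rule MVT2[OF tpos]) (rule score_line[OF qc_score])
    then obtain \<xi> where xi: "0 < \<xi>" "\<xi> < t n"
      and eq: "?F (t n) - ?F 0 = t n * (qc (y + \<xi> *\<^sub>R h) z * (sc z (y + \<xi> *\<^sub>R h) \<bullet> h))"
      by auto
    let ?y = "y + \<xi> *\<^sub>R h"
    have inball: "?y \<in> ball y e"
    proof -
      have "dist y ?y = \<xi> * norm h" using xi by (simp add: dist_norm)
      also have "\<dots> \<le> c * norm h" using xi tle[of n] by (intro mult_right_mono) auto
      finally show ?thesis using ch by simp
    qed
    have "D n z = qc ?y z * (sc z ?y \<bullet> h) * qz z"
      unfolding D_def using eq tnz[of n] by (simp add: field_simps)
    hence "norm (D n z) = qc ?y z * \<bar>sc z ?y \<bullet> h\<bar> * qz z"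
      using qc_pos[of ?y z] qz_nonneg[of z] by (simp add: abs_mult)
    also have "\<dots> \<le> qc ?y z * (norm (sc z ?y) * norm h) * qz z"
      using qc_pos[of ?y z] qz_nonneg[of z] Cauchy_Schwarz_ineq2[of "sc z ?y" h]
      by (intro mult_right_mono mult_left_mono) auto
    also have "\<dots> = norm h * (qc ?y z * norm (sc z ?y) * qz z)" by (simp add: ac_simps)
    also have "\<dots> \<le> norm h * g z" using b[OF inball, of z] by (intro mult_left_mono) auto
    finally show ?thesis .
  qed
  have L2: "(\<lambda>n. integral\<^sup>L lborel (D n)) \<longlonglongrightarrow> (\<integral>z. (qc y z * (sc z y \<bullet> h)) * qz z \<partial>lborel)"
  proof (rule integral_dominated_convergence[where w="\<lambda>z. norm h * g z"])
    show "(\<lambda>z. qc y z * (sc z y \<bullet> h) * qz z) \<in> borel_measurable lborel" by measurable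
    show "\<And>n. D n \<in> borel_measurable lborel" unfolding D_def by measurable
    show "integrable lborel (\<lambda>z. norm h * g z)" using g by simp
    show "AE z in lborel. (\<lambda>n. D n z) \<longlonglongrightarrow> qc y z * (sc z y \<bullet> h) * qz z"
      using lim_pt by simp
    show "\<And>n. AE z in lborel. norm (D n z) \<le> norm h * g z" using bnd by simp
  qed
  have "(\<integral>z. (qc y z * (sc z y \<bullet> h)) * qz z \<partial>lborel) = q y * (sq y \<bullet> h)"
    using LIMSEQ_unique[OF L2[unfolded intD] L1] .
  moreover have "(\<integral>z. (qc y z * qz z) *\<^sub>R sc z y \<partial>lborel) \<bullet> h
      = (\<integral>z. (qc y z * (sc z y \<bullet> h)) * qz z \<partial>lborel)"
    using int_v[of y] by (subst integral_inner_left[symmetric]) (auto simp: ac_simps)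
  ultimately show ?thesis by simp
qed

lemma key: "(\<integral>z. (qc y z * qz z) *\<^sub>R sc z y \<partial>lborel) = q y *\<^sub>R sq y"
proof -
  let ?V = "(\<integral>z. (qc y z * qz z) *\<^sub>R sc z y \<partial>lborel)"
  let ?h = "?V - q y *\<^sub>R sq y"
  have "?h \<bullet> ?h = ?V \<bullet> ?h - (q y *\<^sub>R sq y) \<bullet> ?h" by (simp add: inner_diff_left)
  also have "\<dots> = 0" by (simp add: key_dir)
  finally show ?thesis by simp
qed

end


locale mix2 = mix qc qz sc sq
  for qc :: "'a::euclidean_space \<Rightarrow> 'b::euclidean_space \<Rightarrow> real"
    and qz :: "'b \<Rightarrow> real"
    and sc :: "'b \<Rightarrow> 'a \<Rightarrow> 'a"
    and sq :: "'a \<Rightarrow> 'a" +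
  fixes sp :: "'a \<Rightarrow> 'a" and k :: "'a \<Rightarrow> 'a \<Rightarrow> real"
  assumes qz_prob: "integrable lborel qz" "(\<integral>z. qz z \<partial>lborel) = 1"
    and qc_dens: "\<And>z. integrable lborel (\<lambda>x. qc x z) \<and> (\<integral>x. qc x z \<partial>lborel) = 1"
    and sq_meas: "sq \<in> borel_measurable lborel"
    and sp_meas: "sp \<in> borel_measurable lborel"
    and k_meas: "(\<lambda>(x,y). k x y) \<in> borel_measurable (lborel \<Otimes>\<^sub>M lborel)"
    and int_f: "\<And>x. integrable (mix_joint qc qz) (\<lambda>(y,z). k x y *\<^sub>R (sp y - sc z y))"
    and int_ksd: "integrable (mix_joint qc qz \<Otimes>\<^sub>M mix_joint qc qz)
                    (\<lambda>((x,z),(x',z')). k x x' * ((sp x - sc z x) \<bullet> (sp x' - sc z' x')))"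
begin

abbreviation "J \<equiv> mix_joint qc qz"
abbreviation "Q \<equiv> density lborel (\<lambda>x. ennreal (q x))"

lemma kM[measurable (raw)]:
  assumes "f \<in> borel_measurable M" "g \<in> borel_measurable M"
  shows "(\<lambda>p. k (f p) (g p)) \<in> borel_measurable M"
proof -
  have "(\<lambda>p. (f p, g p)) \<in> measurable M (lborel \<Otimes>\<^sub>M lborel)" using assms by measurable
  from measurable_compose[OF this k_meas] show ?thesis by simp
qed

lemma spM[measurable (raw)]:
  assumes "f \<in> borel_measurable M"
  shows "(\<lambda>p. sp (f p)) \<in> borel_measurable M"
  using measurable_compose[OF assms sp_meas[unfolded measurable_lborel2]] by simp

lemma sqM[measurable (raw)]:
  assumes "f \<in> borel_measurable M"
  shows "(\<lambda>p. sq (f p)) \<in> borel_measurable M"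
  using measurable_compose[OF assms sq_meas[unfolded measurable_lborel2]] by simp

lemma q_meas: "q \<in> borel_measurable borel"
proof -
  have "(\<lambda>x. \<integral>z. qc x z * qz z \<partial>lborel) \<in> borel_measurable lborel"
    by measurable
  thus ?thesis unfolding mix_marginal_def[abs_def] by simp
qed

lemma qM[measurable (raw)]:
  assumes "f \<in> borel_measurable M"
  shows "(\<lambda>p. q (f p)) \<in> borel_measurable M"
  using measurable_compose[OF assms q_meas] by simp

lemma J_eq: "J = density (lborel \<Otimes>\<^sub>M lborel) (\<lambda>p. ennreal (qc (fst p) (snd p) * qz (snd p)))"
  unfolding mix_joint_def by (simp add: case_prod_beta')

lemma sets_J[measurable_cong]: "sets J = sets (lborel \<Otimes>\<^sub>M lborel)"
  unfolding J_eq by simp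

lemma sf_LL: "sigma_finite_measure (lborel \<Otimes>\<^sub>M lborel :: ('a \<times> 'b) measure)"
  by (intro sigma_finite_pair_measure lborel.sigma_finite_measure_axioms)

lemma sf_J: "sigma_finite_measure J"
proof -
  interpret LL: sigma_finite_measure "lborel \<Otimes>\<^sub>M lborel :: ('a \<times> 'b) measure" by (rule sf_LL)
  show ?thesis unfolding J_eq
    by (subst sigma_finite_measure.sigma_finite_iff_density_finite[OF sf_LL]) auto
qed

lemma sf_Q: "sigma_finite_measure Q"
  by (subst sigma_finite_measure.sigma_finite_iff_density_finite[OF sigma_finite_lborel]) auto

lemma marg:
  fixes H :: "'a \<times> 'b \<Rightarrow> 'c::{banach, second_countable_topology}"
  assumes H: "integrable J H"
  shows "integrable lborel (\<lambda>x. \<integral>z. (qc x z * qz z) *\<^sub>R H (x,z) \<partial>lborel)"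
    and "integral\<^sup>L J H = (\<integral>x. \<integral>z. (qc x z * qz z) *\<^sub>R H (x,z) \<partial>lborel \<partial>lborel)"
proof -
  have Hm[measurable]: "H \<in> borel_measurable (lborel \<Otimes>\<^sub>M lborel)"
    using borel_measurable_integrable[OF H] by (simp add: measurable_cong_sets[OF sets_J refl])
  have I: "integrable (lborel \<Otimes>\<^sub>M lborel) (\<lambda>p. (qc (fst p) (snd p) * qz (snd p)) *\<^sub>R H p)"
    using H unfolding J_eq by (subst (asm) integrable_density) (auto simp: w_nonneg)
  show "integrable lborel (\<lambda>x. \<integral>z. (qc x z * qz z) *\<^sub>R H (x,z) \<partial>lborel)"
    using lborel_pair.integrable_fst'[OF I] by simp
  have "integral\<^sup>L J H = integral\<^sup>L (lborel \<Otimes>\<^sub>M lborel) (\<lambda>p. (qc (fst p) (snd p) * qz (snd p)) *\<^sub>R H p)"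
    unfolding J_eq by (subst integral_density) (auto simp: w_nonneg)
  also have "\<dots> = (\<integral>x. \<integral>z. (qc x z * qz z) *\<^sub>R H (x,z) \<partial>lborel \<partial>lborel)"
    using lborel_pair.integral_fst'[OF I] by simp
  finally show "integral\<^sup>L J H = (\<integral>x. \<integral>z. (qc x z * qz z) *\<^sub>R H (x,z) \<partial>lborel \<partial>lborel)" .
qed

lemma inner_marg: "(\<integral>z. (qc y z * qz z) *\<^sub>R (sp y - sc z y) \<partial>lborel) = q y *\<^sub>R (sp y - sq y)"
proof -
  have "(\<integral>z. (qc y z * qz z) *\<^sub>R (sp y - sc z y) \<partial>lborel)
     = (\<integral>z. (qc y z * qz z) *\<^sub>R sp y - (qc y z * qz z) *\<^sub>R sc z y \<partial>lborel)"
    by (simp add: scaleR_diff_right)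
  also have "\<dots> = (\<integral>z. (qc y z * qz z) *\<^sub>R sp y \<partial>lborel) - (\<integral>z. (qc y z * qz z) *\<^sub>R sc z y \<partial>lborel)"
    by (intro Bochner_Integration.integral_diff) (auto intro: int_w int_v)
  also have "\<dots> = q y *\<^sub>R sp y - q y *\<^sub>R sq y"
    unfolding key by (simp add: mix_marginal_def integral_scaleR_left int_w)
  finally show ?thesis by (simp add: scaleR_diff_right)
qed

lemma wit:
  shows "integrable lborel (\<lambda>y. q y *\<^sub>R (k x y *\<^sub>R (sp y - sq y)))"
    and "integrable Q (\<lambda>y. k x y *\<^sub>R (sp y - sq y))"
    and "stein_witness Q sq sp k x = (\<integral>(y,z). k x y *\<^sub>R (sp y - sc z y) \<partial>J)"
proof -
  have inn: "(\<integral>z. (qc y z * qz z) *\<^sub>R (case (y,z) of (y,z) \<Rightarrow> k x y *\<^sub>R (sp y - sc z y)) \<partial>lborel)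
      = q y *\<^sub>R (k x y *\<^sub>R (sp y - sq y))" for y
  proof -
    have "(\<integral>z. (qc y z * qz z) *\<^sub>R (case (y,z) of (y,z) \<Rightarrow> k x y *\<^sub>R (sp y - sc z y)) \<partial>lborel)
       = (\<integral>z. k x y *\<^sub>R ((qc y z * qz z) *\<^sub>R (sp y - sc z y)) \<partial>lborel)"
      by (intro Bochner_Integration.integral_cong) (auto simp: algebra_simps)
    also have "\<dots> = k x y *\<^sub>R (\<integral>z. (qc y z * qz z) *\<^sub>R (sp y - sc z y) \<partial>lborel)"
      by (rule integral_scaleR_right)
    also have "\<dots> = k x y *\<^sub>R (q y *\<^sub>R (sp y - sq y))"
      by (simp only: inner_marg)
    finally show ?thesis by (simp add: mult.commute)
  qed
  show A: "integrable lborel (\<lambda>y. q y *\<^sub>R (k x y *\<^sub>R (sp y - sq y)))"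
    using marg(1)[OF int_f[of x]] unfolding inn .
  show "integrable Q (\<lambda>y. k x y *\<^sub>R (sp y - sq y))"
    using A by (subst integrable_density) (auto intro: less_imp_le[OF q_pos])
  have "stein_witness Q sq sp k x = (\<integral>y. q y *\<^sub>R (k x y *\<^sub>R (sp y - sq y)) \<partial>lborel)"
    unfolding stein_witness_def by (subst integral_density) (auto intro: less_imp_le[OF q_pos])
  also have "\<dots> = (\<integral>(y,z). k x y *\<^sub>R (sp y - sc z y) \<partial>J)"
    using marg(2)[OF int_f[of x]] unfolding inn by simp
  finally show "stein_witness Q sq sp k x = (\<integral>(y,z). k x y *\<^sub>R (sp y - sc z y) \<partial>J)" .
qed

abbreviation "W \<equiv> stein_witness Q sq sp k"

lemma sets_Q[simp]: "sets Q = sets borel" by simp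

lemma W_meas: "W \<in> borel_measurable borel"
proof -
  interpret Qs: sigma_finite_measure Q by (rule sf_Q)
  have "sets (lborel \<Otimes>\<^sub>M Q) = sets (lborel \<Otimes>\<^sub>M lborel)"
    by (intro sets_pair_measure_cong) auto
  hence m: "(\<lambda>(x,y). k x y *\<^sub>R (sp y - sq y)) \<in> borel_measurable (lborel \<Otimes>\<^sub>M Q)"
    by (subst measurable_cong_sets[OF _ refl]) (assumption, measurable)
  have "(\<lambda>x. \<integral>y. k x y *\<^sub>R (sp y - sq y) \<partial>Q) \<in> borel_measurable lborel"
    by (rule Qs.borel_measurable_lebesgue_integral) (use m in simp)
  thus ?thesis unfolding stein_witness_def[abs_def] by simp
qed

lemma WM[measurable (raw)]:
  assumes "f \<in> borel_measurable M"
  shows "(\<lambda>p. W (f p)) \<in> borel_measurable M"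
  using measurable_compose[OF assms W_meas] by simp

lemma S1:
  shows "integrable J (\<lambda>(x,z). (sp x - sc z x) \<bullet> W x)"
    and "(\<integral>((x,z),(x',z')). k x x' * ((sp x - sc z x) \<bullet> (sp x' - sc z' x')) \<partial>(J \<Otimes>\<^sub>M J))
          = (\<integral>(x,z). (sp x - sc z x) \<bullet> W x \<partial>J)"
proof -
  interpret JJ: pair_sigma_finite J J by (intro pair_sigma_finite.intro sf_J)
  have inner: "(\<integral>p'. (\<lambda>((x,z),(x',z')). k x x' * ((sp x - sc z x) \<bullet> (sp x' - sc z' x'))) (p,p') \<partial>J)
      = (case p of (x,z) \<Rightarrow> (sp x - sc z x) \<bullet> W x)" for p
  proof (cases p)
    case (Pair x z)
    have "(\<integral>p'. (\<lambda>((x,z),(x',z')). k x x' * ((sp x - sc z x) \<bullet> (sp x' - sc z' x'))) (p,p') \<partial>J)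
        = (\<integral>p'. (sp x - sc z x) \<bullet> (case p' of (x',z') \<Rightarrow> k x x' *\<^sub>R (sp x' - sc z' x')) \<partial>J)"
      unfolding Pair by (intro Bochner_Integration.integral_cong refl) (auto split: prod.splits)
    also have "\<dots> = (sp x - sc z x) \<bullet> (\<integral>p'. (case p' of (x',z') \<Rightarrow> k x x' *\<^sub>R (sp x' - sc z' x')) \<partial>J)"
      using int_f[of x] by (intro integral_inner_right) auto
    also have "\<dots> = (sp x - sc z x) \<bullet> W x" by (simp only: wit(3))
    finally show ?thesis unfolding Pair by simp
  qed
  show "integrable J (\<lambda>(x,z). (sp x - sc z x) \<bullet> W x)"
    using JJ.integrable_fst'[OF int_ksd] unfolding inner .
  show "(\<integral>((x,z),(x',z')). k x x' * ((sp x - sc z x) \<bullet> (sp x' - sc z' x')) \<partial>(J \<Otimes>\<^sub>M J))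
          = (\<integral>(x,z). (sp x - sc z x) \<bullet> W x \<partial>J)"
    using JJ.integral_fst'[OF int_ksd] unfolding inner by simp
qed

lemma S2:
  shows "integrable Q (\<lambda>x. (sp x - sq x) \<bullet> W x)"
    and "(\<integral>(x,z). (sp x - sc z x) \<bullet> W x \<partial>J) = (\<integral>x. (sp x - sq x) \<bullet> W x \<partial>Q)"
proof -
  have inn: "(\<integral>z. (qc x z * qz z) *\<^sub>R (case (x,z) of (x,z) \<Rightarrow> (sp x - sc z x) \<bullet> W x) \<partial>lborel)
      = q x *\<^sub>R ((sp x - sq x) \<bullet> W x)" for x
  proof -
    have "(\<integral>z. (qc x z * qz z) *\<^sub>R (case (x,z) of (x,z) \<Rightarrow> (sp x - sc z x) \<bullet> W x) \<partial>lborel)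
        = (\<integral>z. ((qc x z * qz z) *\<^sub>R (sp x - sc z x)) \<bullet> W x \<partial>lborel)"
      by (intro Bochner_Integration.integral_cong) auto
    also have "\<dots> = (\<integral>z. (qc x z * qz z) *\<^sub>R (sp x - sc z x) \<partial>lborel) \<bullet> W x"
    proof (rule integral_inner_left)
      have "integrable lborel (\<lambda>z. (qc x z * qz z) *\<^sub>R sp x - (qc x z * qz z) *\<^sub>R sc z x)"
        by (intro Bochner_Integration.integrable_diff) (auto intro: int_w int_v)
      thus "integrable lborel (\<lambda>z. (qc x z * qz z) *\<^sub>R (sp x - sc z x))"
        by (simp add: scaleR_diff_right)
    qed
    also have "\<dots> = q x *\<^sub>R ((sp x - sq x) \<bullet> W x)" by (simp add: inner_marg)
    finally show ?thesis .
  qed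
  have A: "integrable lborel (\<lambda>x. q x *\<^sub>R ((sp x - sq x) \<bullet> W x))"
    using marg(1)[OF S1(1)] unfolding inn .
  show "integrable Q (\<lambda>x. (sp x - sq x) \<bullet> W x)"
    using A by (subst integrable_density) (auto intro: less_imp_le[OF q_pos])
  have "(\<integral>x. (sp x - sq x) \<bullet> W x \<partial>Q) = (\<integral>x. q x *\<^sub>R ((sp x - sq x) \<bullet> W x) \<partial>lborel)"
    by (subst integral_density) (auto intro: less_imp_le[OF q_pos])
  also have "\<dots> = (\<integral>(x,z). (sp x - sc z x) \<bullet> W x \<partial>J)"
    using marg(2)[OF S1(1)] unfolding inn by simp
  finally show "(\<integral>(x,z). (sp x - sc z x) \<bullet> W x \<partial>J) = (\<integral>x. (sp x - sq x) \<bullet> W x \<partial>Q)" by simp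
qed

lemma ennreal3: "0 \<le> a \<Longrightarrow> 0 \<le> b \<Longrightarrow> 0 \<le> c \<Longrightarrow> ennreal a * ennreal b * ennreal c = ennreal (a * b * c)"
  by (simp add: ennreal_mult)

definition Gt :: "'a \<Rightarrow> 'b \<Rightarrow> 'a \<Rightarrow> 'b \<Rightarrow> real" where
  "Gt x z y z' = qc x z * qz z * (qc y z' * qz z') * (k x y * ((sp x - sc z x) \<bullet> (sp y - sc z' y)))"

lemma GtM[measurable (raw)]:
  assumes "f1 \<in> borel_measurable M" "f2 \<in> borel_measurable M" "f3 \<in> borel_measurable M" "f4 \<in> borel_measurable M"
  shows "(\<lambda>p. Gt (f1 p) (f2 p) (f3 p) (f4 p)) \<in> borel_measurable M"
  unfolding Gt_def using assms by measurable

lemma GtM4: "(\<lambda>pp. Gt (fst (fst pp)) (snd (fst pp)) (fst (snd pp)) (snd (snd pp))) \<in> borel_measurable ((lborel \<Otimes>\<^sub>M lborel) \<Otimes>\<^sub>M (lborel \<Otimes>\<^sub>M lborel))"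
  by measurable
lemma GtNM[measurable (raw)]:
  assumes "f1 \<in> borel_measurable M" "f2 \<in> borel_measurable M" "f3 \<in> borel_measurable M" "f4 \<in> borel_measurable M"
  shows "(\<lambda>p. ennreal (norm (Gt (f1 p) (f2 p) (f3 p) (f4 p)))) \<in> borel_measurable M"
proof -
  have "(\<lambda>p. Gt (f1 p) (f2 p) (f3 p) (f4 p)) \<in> borel_measurable M" using assms by measurable
  thus ?thesis by measurable
qed

lemma PB: "ennreal (q x * q y * norm ((sp x - sq x) \<bullet> (k x y *\<^sub>R (sp y - sq y))))
   \<le> (\<integral>\<^sup>+z. \<integral>\<^sup>+z'. ennreal (norm (Gt x z y z')) \<partial>lborel \<partial>lborel)"
proof -
  define a where "a z = (qc x z * qz z) *\<^sub>R (sp x - sc z x)" for z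
  define b where "b z = (qc y z * qz z) *\<^sub>R (sp y - sc z y)" for z
  have ia: "integrable lborel a"
  proof -
    have "integrable lborel (\<lambda>z. (qc x z * qz z) *\<^sub>R sp x - (qc x z * qz z) *\<^sub>R sc z x)"
      by (intro Bochner_Integration.integrable_diff) (auto intro: int_w int_v)
    thus ?thesis unfolding a_def by (simp add: scaleR_diff_right)
  qed
  have ib: "integrable lborel b"
  proof -
    have "integrable lborel (\<lambda>z. (qc y z * qz z) *\<^sub>R sp y - (qc y z * qz z) *\<^sub>R sc z y)"
      by (intro Bochner_Integration.integrable_diff) (auto intro: int_w int_v)
    thus ?thesis unfolding b_def by (simp add: scaleR_diff_right)
  qed
  have Ia: "integral\<^sup>L lborel a = q x *\<^sub>R (sp x - sq x)" unfolding a_def by (rule inner_marg)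
  have Ib: "integral\<^sup>L lborel b = q y *\<^sub>R (sp y - sq y)" unfolding b_def by (rule inner_marg)
  let ?C = "k x y *\<^sub>R integral\<^sup>L lborel b"
  have gt: "Gt x z y z' = k x y * (a z \<bullet> b z')" for z z'
    unfolding Gt_def a_def b_def by (simp add: algebra_simps)
  have phi: "a z \<bullet> ?C = (\<integral>z'. Gt x z y z' \<partial>lborel)" for z
  proof -
    have "a z \<bullet> ?C = k x y * (a z \<bullet> integral\<^sup>L lborel b)" by simp
    also have "\<dots> = k x y * (\<integral>z'. a z \<bullet> b z' \<partial>lborel)"
      using ib by (subst integral_inner_right) auto
    also have "\<dots> = (\<integral>z'. k x y * (a z \<bullet> b z') \<partial>lborel)" by simp
    finally show ?thesis unfolding gt .
  qed
  have iGt: "integrable lborel (\<lambda>z'. Gt x z y z')" for z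
    unfolding gt using ib by auto
  have "q x * q y * ((sp x - sq x) \<bullet> (k x y *\<^sub>R (sp y - sq y))) = integral\<^sup>L lborel a \<bullet> ?C"
    unfolding Ia Ib by (simp add: algebra_simps)
  also have "\<dots> = (\<integral>z. a z \<bullet> ?C \<partial>lborel)" using ia by (subst integral_inner_left) auto
  finally have eq: "q x * q y * ((sp x - sq x) \<bullet> (k x y *\<^sub>R (sp y - sq y))) = (\<integral>z. (\<integral>z'. Gt x z y z' \<partial>lborel) \<partial>lborel)"
    unfolding phi .
  have iPhi: "integrable lborel (\<lambda>z. \<integral>z'. Gt x z y z' \<partial>lborel)"
    unfolding phi[symmetric] using ia by auto
  have "ennreal (q x * q y * norm ((sp x - sq x) \<bullet> (k x y *\<^sub>R (sp y - sq y))))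
      = ennreal (norm (q x * q y * ((sp x - sq x) \<bullet> (k x y *\<^sub>R (sp y - sq y)))))"
    using q_pos[of x] q_pos[of y] by (simp add: abs_mult)
  also have "\<dots> \<le> (\<integral>\<^sup>+z. norm (\<integral>z'. Gt x z y z' \<partial>lborel) \<partial>lborel)"
    unfolding eq by (rule integral_norm_bound_ennreal[OF iPhi])
  also have "\<dots> \<le> (\<integral>\<^sup>+z. \<integral>\<^sup>+z'. ennreal (norm (Gt x z y z')) \<partial>lborel \<partial>lborel)"
    by (intro nn_integral_mono integral_norm_bound_ennreal iGt)
  finally show ?thesis .
qed

lemma JJN: "(\<integral>\<^sup>+p. ennreal (norm ((\<lambda>((x,z),(x',z')). k x x' * ((sp x - sc z x) \<bullet> (sp x' - sc z' x'))) p)) \<partial>(J \<Otimes>\<^sub>M J))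
  = (\<integral>\<^sup>+x. \<integral>\<^sup>+z. \<integral>\<^sup>+y. \<integral>\<^sup>+z'. ennreal (norm (Gt x z y z')) \<partial>lborel \<partial>lborel \<partial>lborel \<partial>lborel)"
proof -
  interpret LL: sigma_finite_measure "lborel \<Otimes>\<^sub>M lborel :: ('a \<times> 'b) measure" by (rule sf_LL)
  interpret LLLL: pair_sigma_finite "lborel \<Otimes>\<^sub>M lborel :: ('a \<times> 'b) measure" "lborel \<Otimes>\<^sub>M lborel :: ('a \<times> 'b) measure"
    by (intro pair_sigma_finite.intro sf_LL)
  have Geq: "(\<lambda>((x,z),(x',z')). k x x' * ((sp x - sc z x) \<bullet> (sp x' - sc z' x')))
     = (\<lambda>pp. k (fst (fst pp)) (fst (snd pp)) * ((sp (fst (fst pp)) - sc (snd (fst pp)) (fst (fst pp)))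
          \<bullet> (sp (fst (snd pp)) - sc (snd (snd pp)) (fst (snd pp)))))"
    by (auto simp: fun_eq_iff)
  let ?w = "\<lambda>p. ennreal (qc (fst p) (snd p) * qz (snd p))"
  have JJ: "J \<Otimes>\<^sub>M J = density ((lborel \<Otimes>\<^sub>M lborel) \<Otimes>\<^sub>M (lborel \<Otimes>\<^sub>M lborel)) (\<lambda>(p,p'). ?w p * ?w p')"
    unfolding J_eq by (rule pair_measure_density) (auto intro: sf_LL sf_J[unfolded J_eq])
  have "(\<integral>\<^sup>+p. ennreal (norm ((\<lambda>((x,z),(x',z')). k x x' * ((sp x - sc z x) \<bullet> (sp x' - sc z' x'))) p)) \<partial>(J \<Otimes>\<^sub>M J))
     = (\<integral>\<^sup>+pp. ennreal (norm (Gt (fst (fst pp)) (snd (fst pp)) (fst (snd pp)) (snd (snd pp))))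
          \<partial>((lborel \<Otimes>\<^sub>M lborel) \<Otimes>\<^sub>M (lborel \<Otimes>\<^sub>M lborel)))"
    unfolding JJ Geq
    apply (subst nn_integral_density)
      apply measurable
    apply (intro nn_integral_cong)
    apply (auto simp: Gt_def abs_mult abs_of_pos[OF qc_pos] abs_of_nonneg[OF qz_nonneg])
    apply (subst ennreal3)
       apply (auto simp: ac_simps less_imp_le[OF qc_pos] qz_nonneg)
    done
  also have "\<dots> = (\<integral>\<^sup>+p. \<integral>\<^sup>+p'. ennreal (norm (Gt (fst p) (snd p) (fst p') (snd p')))
          \<partial>(lborel \<Otimes>\<^sub>M lborel) \<partial>(lborel \<Otimes>\<^sub>M lborel))"
    apply (subst sigma_finite_measure.nn_integral_fst[OF sf_LL, symmetric])
     apply (rule measurable_compose[OF GtM4]; simp)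
    apply simp
    done
  also have "\<dots> = (\<integral>\<^sup>+p. \<integral>\<^sup>+y. \<integral>\<^sup>+z'. ennreal (norm (Gt (fst p) (snd p) y z')) \<partial>lborel \<partial>lborel
          \<partial>(lborel \<Otimes>\<^sub>M lborel))"
    apply (intro nn_integral_cong)
    subgoal for p
      by (subst lborel.nn_integral_fst[symmetric]) measurable
    done
  also have "\<dots> = (\<integral>\<^sup>+x. \<integral>\<^sup>+z. \<integral>\<^sup>+y. \<integral>\<^sup>+z'. ennreal (norm (Gt x z y z')) \<partial>lborel \<partial>lborel \<partial>lborel \<partial>lborel)"
    by (subst lborel.nn_integral_fst[symmetric]) measurable
  finally show ?thesis .
qed

lemma stepC: "integrable (Q \<Otimes>\<^sub>M Q) (\<lambda>(x,y). (sp x - sq x) \<bullet> (k x y *\<^sub>R (sp y - sq y)))"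
proof -
  let ?F = "\<lambda>(x,y). (sp x - sq x) \<bullet> (k x y *\<^sub>R (sp y - sq y))"
  have QQ: "Q \<Otimes>\<^sub>M Q = density (lborel \<Otimes>\<^sub>M lborel) (\<lambda>(x,y). ennreal (q x) * ennreal (q y))"
    by (rule pair_measure_density) (auto intro: sf_Q sigma_finite_lborel)
  have sQQ: "sets (Q \<Otimes>\<^sub>M Q) = sets (lborel \<Otimes>\<^sub>M lborel)" unfolding QQ by simp
  have Fm: "?F \<in> borel_measurable (Q \<Otimes>\<^sub>M Q)"
    by (subst measurable_cong_sets[OF sQQ refl]) measurable
  have "(\<integral>\<^sup>+p. ennreal (norm (?F p)) \<partial>(Q \<Otimes>\<^sub>M Q))
      = (\<integral>\<^sup>+x. \<integral>\<^sup>+y. ennreal (q x * q y * norm ((sp x - sq x) \<bullet> (k x y *\<^sub>R (sp y - sq y)))) \<partial>lborel \<partial>lborel)"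
    unfolding QQ
    apply (subst nn_integral_density)
      apply measurable
    apply (subst lborel.nn_integral_fst[symmetric])
     apply measurable
    apply (intro nn_integral_cong)
    using q_pos by (simp flip: ennreal_mult add: less_imp_le)
  also have "\<dots> \<le> (\<integral>\<^sup>+x. \<integral>\<^sup>+y. \<integral>\<^sup>+z. \<integral>\<^sup>+z'. ennreal (norm (Gt x z y z')) \<partial>lborel \<partial>lborel \<partial>lborel \<partial>lborel)"
    by (intro nn_integral_mono PB)
  also have "\<dots> = (\<integral>\<^sup>+x. \<integral>\<^sup>+z. \<integral>\<^sup>+y. \<integral>\<^sup>+z'. ennreal (norm (Gt x z y z')) \<partial>lborel \<partial>lborel \<partial>lborel \<partial>lborel)"
    apply (intro nn_integral_cong)
    subgoal for x
      apply (rule lborel_pair.Fubini')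
      apply measurable
      done
    done
  also have "\<dots> = (\<integral>\<^sup>+p. ennreal (norm ((\<lambda>((x,z),(x',z')). k x x' * ((sp x - sc z x) \<bullet> (sp x' - sc z' x'))) p)) \<partial>(J \<Otimes>\<^sub>M J))"
    by (rule JJN[symmetric])
  also have "\<dots> < \<infinity>" using int_ksd unfolding integrable_iff_bounded by simp
  finally show ?thesis using Fm unfolding integrable_iff_bounded by simp
qed

lemma S3: "KSD2 Q sq sp k = (\<integral>x. (sp x - sq x) \<bullet> W x \<partial>Q)"
proof -
  interpret QQ: pair_sigma_finite Q Q by (intro pair_sigma_finite.intro sf_Q)
  have "KSD2 Q sq sp k = (\<integral>x. \<integral>y. (sp x - sq x) \<bullet> (k x y *\<^sub>R (sp y - sq y)) \<partial>Q \<partial>Q)"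
    unfolding KSD2_def using QQ.integral_fst'[OF stepC] by simp
  also have "\<dots> = (\<integral>x. (sp x - sq x) \<bullet> W x \<partial>Q)"
    unfolding stein_witness_def
    by (intro Bochner_Integration.integral_cong refl integral_inner_right) (auto intro: wit(2))
  finally show ?thesis .
qed

end


theorem proposition1:
  fixes qc :: "'a::euclidean_space \<Rightarrow> 'b::euclidean_space \<Rightarrow> real"
    and qz :: "'b \<Rightarrow> real"
    and sc :: "'b \<Rightarrow> 'a \<Rightarrow> 'a"
    and sq :: "'a \<Rightarrow> 'a"
    and p :: "'a \<Rightarrow> real"
    and sp :: "'a \<Rightarrow> 'a"
    and k :: "'a \<Rightarrow> 'a \<Rightarrow> real"
  assumes qz_nonneg: "\<And>z. qz z \<ge> 0"
    and qz_meas: "qz \<in> borel_measurable lborel"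
    and qz_prob: "integrable lborel qz" "(\<integral>z. qz z \<partial>lborel) = 1"
    and qc_meas: "(\<lambda>(x,z). qc x z) \<in> borel_measurable (lborel \<Otimes>\<^sub>M lborel)"
    and qc_dens: "\<And>z. integrable lborel (\<lambda>x. qc x z) \<and> (\<integral>x. qc x z \<partial>lborel) = 1"
    and qc_score: "\<And>z. has_score (\<lambda>x. qc x z) (sc z)"
    and sc_meas: "(\<lambda>(x,z). sc z x) \<in> borel_measurable (lborel \<Otimes>\<^sub>M lborel)"
    and q_score: "has_score (mix_marginal qc qz) sq"
    and sq_meas: "sq \<in> borel_measurable lborel"
    and p_dens: "p \<in> borel_measurable lborel" "integrable lborel p" "(\<integral>x. p x \<partial>lborel) = 1"
    and p_score: "has_score p sp"
    and sp_meas: "sp \<in> borel_measurable lborel"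
    and k_cont: "continuous_on UNIV (\<lambda>(x,y). k x y)"
    and k_psd: "psd_kernel k"
    and dom: "\<And>x. \<exists>e>0. \<exists>g. integrable lborel g \<and>
                 (\<forall>y\<in>ball x e. \<forall>z. qc y z * norm (sc z y) * qz z \<le> g z)"
    and int_f: "\<And>x. integrable (mix_joint qc qz) (\<lambda>(y,z). k x y *\<^sub>R (sp y - sc z y))"
    and int_ksd: "integrable (mix_joint qc qz \<Otimes>\<^sub>M mix_joint qc qz)
                    (\<lambda>((x,z),(x',z')). k x x' * ((sp x - sc z x) \<bullet> (sp x' - sc z' x')))"
  shows "(\<forall>x. stein_witness (density lborel (mix_marginal qc qz)) sq sp k x =
              (\<integral>(y,z). k x y *\<^sub>R (sp y - sc z y) \<partial>(mix_joint qc qz)))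
         \<and> KSD2 (density lborel (mix_marginal qc qz)) sq sp k =
              (\<integral>((x,z),(x',z')). k x x' * ((sp x - sc z x) \<bullet> (sp x' - sc z' x'))
                  \<partial>(mix_joint qc qz \<Otimes>\<^sub>M mix_joint qc qz))"
  proof -
  have k_meas: "(\<lambda>(x,y). k x y) \<in> borel_measurable (lborel \<Otimes>\<^sub>M lborel)"
    using borel_measurable_continuous_onI[OF k_cont] by (simp add: lborel_prod)
  interpret mix2 qc qz sc sq sp k
    by (unfold_locales; (rule assms k_meas)?)
  show ?thesis
    using wit(3) S1(2) S2(2) S3 by simp
qed

end
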